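(* Consider the covariate-adaptive randomization procedure described in the context with $I\ge1$ covariates, covariate $i$ having $m_i>1$ levels ($m=\prod_{i=1}^I m_i$ strata), and nonnegative weights $w_o$, $w_s$, $w_{m,i}$ ($i=1,\dots,I$) with $w_o+\sum_{i=1}^I w_{m,i}+w_s=1$. If \[ u^*:=\sum_{l=1}^{I}\ \sum_{1\le i_1<i_2<\dots<i_l\le I}\Big\{\Big(w_o+\sum_{j\in\{1,\dots,I\}\setminus\{i_1,\dots,i_l\}}w_{m,j}\Big)\prod_{t=1}^l (m_{i_t}-1)\Big\}<\frac12, \] then $(\mathbf{D}_n)_{n\ge1}$ is a positive recurrent Markov chain on $\mathbb{Z}^m$.
   Context: Two treatments, labelled 1 and 2. There are $I$ covariates, covariate $i$ having $m_i$ levels; a stratum is a profile $(k_1,\dots,k_I)$ with $1\le k_i\le m_i$. The margin $(i;k_i)$ is the set of patients whose $i$-th covariate is at level $k_i$. Patients arrive sequentially; their covariate profiles $Z_1,Z_2,\dots$ are i.i.d., $P(Z_j=(k_1,\dots,k_I))=p(k_1,\dots,k_I)\ge0$, summing to 1. For the first $n$ patients let $D_n$ be (number assigned to treatment 1) minus (number assigned to treatment 2) overall, $D_n(i;k_i)$ the same difference within margin $(i;k_i)$, and $D_n(k_1,\dots,k_I)$ within stratum $(k_1,\dots,k_I)$; $\mathbf{D}_n=[D_n(k_1,\dots,k_I)]\in\mathbb{Z}^m$. Procedure: fix the weights above and $0<q<p<1$ with $p+q=1$. Patient 1 gets treatment 1 with probability $1/2$. For $n>1$, if patient $n$ is in stratum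 $(k_1^*,\dots,k_I^* )$, let $\mathit{Imb}_n^{(1)}=w_o(D_{n-1}+1)^2+\sum_{i=1}^I w_{m,i}(D_{n-1}(i;k_i^* )+1)^2+w_s(D_{n-1}(k_1^*,\dots,k_I^* )+1)^2$ and $\mathit{Imb}_n^{(2)}$ the same with $+1$ replaced by $-1$. Conditional on $Z_1,\dots,Z_n$ and previous assignments, patient $n$ is assigned treatment 1 with probability $q$ if $\mathit{Imb}_n^{(1)}>\mathit{Imb}_n^{(2)}$, $p$ if $\mathit{Imb}_n^{(1)}<\mathit{Imb}_n^{(2)}$, and $1/2$ otherwise. Under this procedure $(\mathbf{D}_n)_{n\ge1}$ is a Markov chain on $\mathbb{Z}^m$. *)

theory Defs
  imports Complex_Main "HOL-Library.FuncSet"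
begin

text \<open>A kernel is given by transition probabilities P x y together with a finite
set N x containing every y with P x y \<noteq> 0.\<close>

fun nstep :: "('s \<Rightarrow> 's \<Rightarrow> real) \<Rightarrow> ('s \<Rightarrow> 's set) \<Rightarrow> nat \<Rightarrow> 's \<Rightarrow> 's \<Rightarrow> real" where
  "nstep P N 0 x y = (if x = y then 1 else 0)"
| "nstep P N (Suc n) x y = (\<Sum>z\<in>N x. P x z * nstep P N n z y)"

text \<open>first_passage P N n x y = probability that, starting at x, the first visit
to y (at a time \<ge> 1) happens at time n+1.\<close>
fun first_passage :: "('s \<Rightarrow> 's \<Rightarrow> real) \<Rightarrow> ('s \<Rightarrow> 's set) \<Rightarrow> nat \<Rightarrow> 's \<Rightarrow> 's \<Rightarrow> real" where
  "first_passage P N 0 x y = P x y"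
| "first_passage P N (Suc n) x y = (\<Sum>z\<in>N x - {y}. P x z * first_passage P N n z y)"

definition pos_recurrent_state :: "('s \<Rightarrow> 's \<Rightarrow> real) \<Rightarrow> ('s \<Rightarrow> 's set) \<Rightarrow> 's \<Rightarrow> bool" where
  "pos_recurrent_state P N x \<longleftrightarrow>
     (\<lambda>n. first_passage P N n x x) sums 1 \<and>
     summable (\<lambda>n. real (Suc n) * first_passage P N n x x)"

text \<open>The chain (X_n)_{n\<ge>1} started from X_0 = x0 is positive recurrent: every state
it visits with positive probability (at some time n \<ge> 1) is positive recurrent.\<close>
definition pos_recurrent_chain :: "('s \<Rightarrow> 's \<Rightarrow> real) \<Rightarrow> ('s \<Rightarrow> 's set) \<Rightarrow> 's \<Rightarrow> bool" where
  "pos_recurrent_chain P N x0 \<longleftrightarrow>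
     (\<forall>y. (\<exists>n\<ge>1. nstep P N n x0 y > 0) \<longrightarrow> pos_recurrent_state P N y)"

text \<open>Covariates are numbered 1..I, covariate i has levels 1..m i. A state
D :: (nat \<Rightarrow> nat) \<Rightarrow> int assigns to each stratum its imbalance; the reachable
states vanish outside the strata, so they are exactly the elements of Z^m.\<close>

definition strata :: "nat \<Rightarrow> (nat \<Rightarrow> nat) \<Rightarrow> (nat \<Rightarrow> nat) set" where
  "strata I m = (\<Pi>\<^sub>E i\<in>{1..I}. {1..m i})"

definition overall_imb :: "nat \<Rightarrow> (nat \<Rightarrow> nat) \<Rightarrow> ((nat \<Rightarrow> nat) \<Rightarrow> int) \<Rightarrow> int" where
  "overall_imb I m D = (\<Sum>k\<in>strata I m. D k)"

definition margin_imb :: "nat \<Rightarrow> (nat \<Rightarrow> nat) \<Rightarrow> ((nat \<Rightarrow> nat) \<Rightarrow> int) \<Rightarrow> nat \<Rightarrow> nat \<Rightarrow> int" where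
  "margin_imb I m D i l = (\<Sum>k\<in>{k\<in>strata I m. k i = l}. D k)"

text \<open>Imb for a new patient in stratum k if assigned with sign s (s = 1: treatment 1,
s = -1: treatment 2).\<close>
definition Imb :: "nat \<Rightarrow> (nat \<Rightarrow> nat) \<Rightarrow> real \<Rightarrow> (nat \<Rightarrow> real) \<Rightarrow> real
                   \<Rightarrow> ((nat \<Rightarrow> nat) \<Rightarrow> int) \<Rightarrow> (nat \<Rightarrow> nat) \<Rightarrow> int \<Rightarrow> real" where
  "Imb I m wo wm ws D k s =
     wo * (of_int (overall_imb I m D + s))\<^sup>2
     + (\<Sum>i=1..I. wm i * (of_int (margin_imb I m D i (k i) + s))\<^sup>2)
     + ws * (of_int (D k + s))\<^sup>2"

text \<open>Probability that a new patient in stratum k gets treatment 1, given state D.\<close>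
definition assign_prob :: "nat \<Rightarrow> (nat \<Rightarrow> nat) \<Rightarrow> real \<Rightarrow> (nat \<Rightarrow> real) \<Rightarrow> real \<Rightarrow> real \<Rightarrow> real
                   \<Rightarrow> ((nat \<Rightarrow> nat) \<Rightarrow> int) \<Rightarrow> (nat \<Rightarrow> nat) \<Rightarrow> real" where
  "assign_prob I m wo wm ws p q D k =
     (let i1 = Imb I m wo wm ws D k 1; i2 = Imb I m wo wm ws D k (-1) in
      if i1 > i2 then q else if i1 < i2 then p else 1/2)"

definition car_succ :: "nat \<Rightarrow> (nat \<Rightarrow> nat) \<Rightarrow> ((nat \<Rightarrow> nat) \<Rightarrow> int) \<Rightarrow> ((nat \<Rightarrow> nat) \<Rightarrow> int) set" where
  "car_succ I m D = (\<lambda>k. D(k := D k + 1)) ` strata I m \<union> (\<lambda>k. D(k := D k - 1)) ` strata I m"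

text \<open>Transition probabilities of (D_n); pr k = P(Z_j = k).\<close>
definition car_trans :: "nat \<Rightarrow> (nat \<Rightarrow> nat) \<Rightarrow> real \<Rightarrow> (nat \<Rightarrow> real) \<Rightarrow> real \<Rightarrow> real \<Rightarrow> real
                   \<Rightarrow> ((nat \<Rightarrow> nat) \<Rightarrow> real)
                   \<Rightarrow> ((nat \<Rightarrow> nat) \<Rightarrow> int) \<Rightarrow> ((nat \<Rightarrow> nat) \<Rightarrow> int) \<Rightarrow> real" where
  "car_trans I m wo wm ws p q pr D D' =
     (\<Sum>k\<in>strata I m. pr k *
        ((if D' = D(k := D k + 1) then assign_prob I m wo wm ws p q D k else 0)
       + (if D' = D(k := D k - 1) then 1 - assign_prob I m wo wm ws p q D k else 0)))"

end

theory Submission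
  imports Defs
begin


fun taboo :: "('s \<Rightarrow> 's \<Rightarrow> real) \<Rightarrow> ('s \<Rightarrow> 's set) \<Rightarrow> 's \<Rightarrow> nat \<Rightarrow> 's \<Rightarrow> real" where
  "taboo P N y 0 x = 1"
| "taboo P N y (Suc n) x = (\<Sum>z\<in>N x - {y}. P x z * taboo P N y n z)"

locale gen_chain =
  fixes P :: "'s \<Rightarrow> 's \<Rightarrow> real" and N :: "'s \<Rightarrow> 's set"
  assumes finN: "\<And>x. finite (N x)"
    and Pnn: "\<And>x z. 0 \<le> P x z"
    and stoch: "\<And>x. (\<Sum>z\<in>N x. P x z) = 1"
    and Pout: "\<And>x z. z \<notin> N x \<Longrightarrow> P x z = 0"
begin

lemma sub_le1: "(\<Sum>z\<in>N x - {y}. P x z) \<le> 1"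
proof -
  have "(\<Sum>z\<in>N x - {y}. P x z) \<le> (\<Sum>z\<in>N x. P x z)"
    by (rule sum_mono2) (auto simp: finN Pnn)
  then show ?thesis using stoch by simp
qed

lemma taboo_bounds: "0 \<le> taboo P N y n x \<and> taboo P N y n x \<le> 1"
proof (induction n arbitrary: x)
  case 0 then show ?case by simp
next
  case (Suc n)
  have "(\<Sum>z\<in>N x - {y}. P x z * taboo P N y n z) \<le> (\<Sum>z\<in>N x - {y}. P x z)"
    by (rule sum_mono) (use Suc Pnn in \<open>auto intro: mult_left_le\<close>)
  moreover have "0 \<le> (\<Sum>z\<in>N x - {y}. P x z * taboo P N y n z)"
    by (rule sum_nonneg) (use Suc Pnn in auto)
  ultimately show ?case using sub_le1[of x y] by simp
qed

lemma fp_eq: "first_passage P N n x y = taboo P N y n x - taboo P N y (Suc n) x"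
proof (induction n arbitrary: x)
  case 0
  show ?case
  proof (cases "y \<in> N x")
    case True
    then have "(\<Sum>z\<in>N x. P x z) = P x y + (\<Sum>z\<in>N x - {y}. P x z)"
      using sum.remove[OF finN True] by simp
    then show ?thesis using stoch[of x] by simp
  next
    case False
    then have "N x - {y} = N x" by auto
    then show ?thesis using stoch[of x] Pout[OF False] by simp
  qed
next
  case (Suc n)
  have "first_passage P N (Suc n) x y = (\<Sum>z\<in>N x - {y}. P x z * (taboo P N y n z - taboo P N y (Suc n) z))"
    by (simp only: first_passage.simps Suc)
  also have "\<dots> = taboo P N y (Suc n) x - taboo P N y (Suc (Suc n)) x"
    by (simp add: right_diff_distrib sum_subtractf)
  finally show ?case .
qed

lemma fp_nonneg: "0 \<le> first_passage P N n x y"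
  by (induction n arbitrary: x) (auto intro!: sum_nonneg mult_nonneg_nonneg Pnn)

lemma taboo_partial:
  "(\<Sum>n<Suc M. taboo P N y n x) = 1 + (\<Sum>z\<in>N x - {y}. P x z * (\<Sum>n<M. taboo P N y n z))"
proof -
  have "(\<Sum>n<Suc M. taboo P N y n x) = taboo P N y 0 x + (\<Sum>n<M. taboo P N y (Suc n) x)"
    by (rule sum.lessThan_Suc_shift)
  also have "(\<Sum>n<M. taboo P N y (Suc n) x) = (\<Sum>z\<in>N x - {y}. P x z * (\<Sum>n<M. taboo P N y n z))"
    by (simp add: sum_distrib_left sum.swap[of _ "{..<M}"])
  finally show ?thesis by simp
qed

lemma super_solution:
  assumes clos: "\<And>x z. x \<in> X \<Longrightarrow> z \<in> N x \<Longrightarrow> P x z \<noteq> 0 \<Longrightarrow> z \<in> X"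
    and Wsup: "\<And>x. x \<in> X \<Longrightarrow> 1 + (\<Sum>z\<in>N x - {y}. P x z * W z) \<le> W x"
    and Wnn: "\<And>x. x \<in> X \<Longrightarrow> 0 \<le> W x"
  shows "\<forall>x\<in>X. (\<Sum>n<M. taboo P N y n x) \<le> W x"
proof (induction M)
  case 0 then show ?case using Wnn by simp
next
  case (Suc M)
  show ?case
  proof
    fix x assume xX: "x \<in> X"
    have "(\<Sum>z\<in>N x - {y}. P x z * (\<Sum>n<M. taboo P N y n z)) \<le> (\<Sum>z\<in>N x - {y}. P x z * W z)"
    proof (rule sum_mono)
      fix z assume z: "z \<in> N x - {y}"
      show "P x z * (\<Sum>n<M. taboo P N y n z) \<le> P x z * W z"
      proof (cases "P x z = 0")
        case False
        then have "z \<in> X" using clos xX z by auto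
        then show ?thesis using Suc.IH Pnn by (simp add: mult_left_mono)
      qed simp
    qed
    then show "(\<Sum>n<Suc M. taboo P N y n x) \<le> W x"
      using taboo_partial[where M=M and y=y and x=x] Wsup[OF xX] by linarith
  qed
qed

lemma weighted_identity:
  "(\<Sum>n<K. real (Suc n) * (taboo P N y n x - taboo P N y (Suc n) x))
     = (\<Sum>n<K. taboo P N y n x) - real K * taboo P N y K x"
  by (induction K) (auto simp: algebra_simps)

lemma pos_rec_from_W:
  assumes clos: "\<And>x z. x \<in> X \<Longrightarrow> z \<in> N x \<Longrightarrow> P x z \<noteq> 0 \<Longrightarrow> z \<in> X"
    and Wsup: "\<And>x. x \<in> X \<Longrightarrow> 1 + (\<Sum>z\<in>N x - {y}. P x z * W z) \<le> W x"
    and Wnn: "\<And>x. x \<in> X \<Longrightarrow> 0 \<le> W x"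
    and yX: "y \<in> X"
  shows "pos_recurrent_state P N y"
proof -
  let ?h = "\<lambda>n. taboo P N y n y"
  have bd: "\<And>M. (\<Sum>n<M. ?h n) \<le> W y"
  proof -
    fix M
    have "\<forall>x\<in>X. (\<Sum>n<M. taboo P N y n x) \<le> W x"
      by (rule super_solution[where y=y and W=W and X=X]) (use clos Wsup Wnn in auto)
    then show "(\<Sum>n<M. ?h n) \<le> W y" using yX by blast
  qed
  have hnn: "\<And>n. 0 \<le> ?h n" using taboo_bounds by blast
  have sh: "summable ?h"
    by (rule summableI_nonneg_bounded[OF hnn bd])
  have lim: "?h \<longlonglongrightarrow> 0" using summable_LIMSEQ_zero[OF sh] .
  have "(\<lambda>n. ?h n - ?h (Suc n)) sums (?h 0 - 0)"
    by (rule telescope_sums'[OF lim])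
  then have s1: "(\<lambda>n. first_passage P N n y y) sums 1"
    by (simp add: fp_eq)
  have s2: "summable (\<lambda>n. real (Suc n) * first_passage P N n y y)"
  proof (rule summableI_nonneg_bounded)
    fix n show "0 \<le> real (Suc n) * first_passage P N n y y"
      using fp_nonneg by simp
  next
    fix K
    have "(\<Sum>n<K. real (Suc n) * first_passage P N n y y)
        = (\<Sum>n<K. ?h n) - real K * ?h K"
      unfolding fp_eq by (rule weighted_identity)
    also have "\<dots> \<le> W y" proof -
      have "0 \<le> real K * ?h K" using hnn[of K] by simp
      then show ?thesis using bd[of K] by linarith
    qed
    finally show "(\<Sum>n<K. real (Suc n) * first_passage P N n y y) \<le> W y" .
  qed
  show ?thesis unfolding pos_recurrent_state_def using s1 s2 by blast
qed

end


lemma sum_upd: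
  fixes h :: "'c \<Rightarrow> 'a \<Rightarrow> 'b::ab_group_add"
  assumes "finite A" "k \<in> A"
  shows "(\<Sum>k'\<in>A. h ((x(k:=v)) k') k') = (\<Sum>k'\<in>A. h (x k') k') - h (x k) k + h v k"
proof -
  have "(\<Sum>k'\<in>A. h ((x(k:=v)) k') k') = h ((x(k:=v)) k) k + (\<Sum>k'\<in>A - {k}. h ((x(k:=v)) k') k')"
    by (rule sum.remove[OF assms])
  also have "(\<Sum>k'\<in>A - {k}. h ((x(k:=v)) k') k') = (\<Sum>k'\<in>A - {k}. h (x k') k')"
    by (rule sum.cong) auto
  also have "(\<Sum>k'\<in>A. h (x k') k') = h (x k) k + (\<Sum>k'\<in>A - {k}. h (x k') k')"
    by (rule sum.remove[OF assms])
  ultimately show ?thesis by (simp add: algebra_simps)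
qed

lemma sum_upd_lin:
  assumes "finite A"
  shows "(\<Sum>k'\<in>A. (x(k:=x k + s)) k') = (\<Sum>k'\<in>A. x k') + (if k \<in> A then s else (0::int))"
proof (cases "k \<in> A")
  case True
  show ?thesis using sum_upd[OF assms True, of "\<lambda>a b. a" x "x k + s"] True by simp
next
  case False
  then have "(\<Sum>k'\<in>A. (x(k:=x k + s)) k') = (\<Sum>k'\<in>A. x k')" by (intro sum.cong) auto
  then show ?thesis using False by simp
qed

lemma sq_upd:
  fixes f :: "'a \<Rightarrow> real"
  assumes "finite A" "a \<in> A"
  shows "(\<Sum>l\<in>A. (f l + (if a = l then s else 0))\<^sup>2) = (\<Sum>l\<in>A. (f l)\<^sup>2) + (f a + s)\<^sup>2 - (f a)\<^sup>2"
proof -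
  have "(\<Sum>l\<in>A. (f l + (if a = l then s else 0))\<^sup>2) = (f a + (if a = a then s else 0))\<^sup>2 + (\<Sum>l\<in>A-{a}. (f l + (if a = l then s else 0))\<^sup>2)"
    by (rule sum.remove[OF assms])
  also have "(\<Sum>l\<in>A-{a}. (f l + (if a = l then s else 0))\<^sup>2) = (\<Sum>l\<in>A-{a}. (f l)\<^sup>2)"
    by (rule sum.cong) auto
  also have "(\<Sum>l\<in>A. (f l)\<^sup>2) = (f a)\<^sup>2 + (\<Sum>l\<in>A-{a}. (f l)\<^sup>2)"
    by (rule sum.remove[OF assms])
  ultimately show ?thesis by simp
qed

lemma upd_eq_iff: "(x(k := x k + 1) = x(k' := x k' + 1)) \<longleftrightarrow> k = k'"
  for x :: "'a \<Rightarrow> int"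
proof
  assume h: "x(k := x k + 1) = x(k' := x k' + 1)"
  show "k = k'"
  proof (rule ccontr)
    assume "k \<noteq> k'"
    then have "(x(k := x k + 1)) k = (x(k' := x k' + 1)) k" using h by simp
    then show False using \<open>k \<noteq> k'\<close> by simp
  qed
qed simp

lemma dn_eq_iff: "(x(k := x k - 1) = x(k' := x k' - 1)) \<longleftrightarrow> k = k'"
  for x :: "'a \<Rightarrow> int"
proof
  assume h: "x(k := x k - 1) = x(k' := x k' - 1)"
  show "k = k'"
  proof (rule ccontr)
    assume "k \<noteq> k'"
    then have "(x(k := x k - 1)) k = (x(k' := x k' - 1)) k" using h by simp
    then show False using \<open>k \<noteq> k'\<close> by simp
  qed
qed simp

lemma up_ne_dn: "x(k := x k + 1) \<noteq> x(k' := x k' - 1)"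
  for x :: "'a \<Rightarrow> int"
proof
  assume h: "x(k := x k + 1) = x(k' := x k' - 1)"
  then have "(x(k := x k + 1)) k = (x(k' := x k' - 1)) k" by simp
  then show False by (cases "k = k'") auto
qed

locale car =
  fixes I :: nat and m :: "nat \<Rightarrow> nat"
    and wo ws p q :: real and wm :: "nat \<Rightarrow> real"
    and pr :: "(nat \<Rightarrow> nat) \<Rightarrow> real"
  assumes I1: "I \<ge> 1"
    and m1: "\<forall>i\<in>{1..I}. m i > 1"
    and wo0: "wo \<ge> 0" and ws0: "ws \<ge> 0" and wm0: "\<forall>i\<in>{1..I}. wm i \<ge> 0"
    and wsum: "wo + (\<Sum>i=1..I. wm i) + ws = 1"
    and q0: "0 < q" and qp: "q < p" and p1: "p < 1" and pq: "p + q = 1"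
    and pr0: "\<forall>k\<in>strata I m. pr k \<ge> 0"
    and prsum: "(\<Sum>k\<in>strata I m. pr k) = 1"
    and c0pos: "(if I = 1 then ws + wm 1 else ws) > 0"
begin

abbreviation "S \<equiv> strata I m"
abbreviation "ap \<equiv> assign_prob I m wo wm ws p q"
abbreviation "Pt \<equiv> car_trans I m wo wm ws p q pr"
abbreviation "Nt \<equiv> car_succ I m"
abbreviation "Imx \<equiv> Imb I m wo wm ws"

lemma finS: "finite S"
  unfolding strata_def by (rule finite_PiE) auto

lemma S_ne: "S \<noteq> {}"
  unfolding strata_def using m1 by (auto simp: PiE_eq_empty_iff)

lemma finN: "finite (Nt x)"
  unfolding car_succ_def using finS by simp

lemma ap_bounds: "q \<le> ap x k \<and> ap x k \<le> p"
  using qp pq unfolding assign_prob_def Let_def by auto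

lemma delta_sum: "k \<in> S \<Longrightarrow> (\<Sum>ka\<in>S. pr ka * (if ka = k then f ka else 0)) = pr k * f k"
proof -
  assume k: "k \<in> S"
  have "(\<Sum>ka\<in>S. pr ka * (if ka = k then f ka else 0)) = (\<Sum>ka\<in>S. if ka = k then pr ka * f ka else 0)"
    by (intro sum.cong) auto
  then show ?thesis using k finS by simp
qed

lemma trans_up: "k \<in> S \<Longrightarrow> Pt x (x(k := x k + 1)) = pr k * ap x k"
  unfolding car_trans_def using delta_sum[of k "ap x"]
  by (simp add: upd_eq_iff up_ne_dn eq_commute[of k])

lemma trans_dn: "k \<in> S \<Longrightarrow> Pt x (x(k := x k - 1)) = pr k * (1 - ap x k)"
  unfolding car_trans_def using delta_sum[of k "\<lambda>k. 1 - ap x k"]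
  by (simp add: dn_eq_iff up_ne_dn[symmetric] eq_commute[of k])

lemma sum_trans:
  "(\<Sum>z\<in>Nt x. Pt x z * f z) =
     (\<Sum>k\<in>S. pr k * (ap x k * f (x(k := x k + 1)) + (1 - ap x k) * f (x(k := x k - 1))))"
proof -
  let ?U = "(\<lambda>k. x(k := x k + 1)) ` S" and ?D = "(\<lambda>k. x(k := x k - 1)) ` S"
  have injU: "inj_on (\<lambda>k. x(k := x k + 1)) S" by (auto simp: inj_on_def upd_eq_iff)
  have injD: "inj_on (\<lambda>k. x(k := x k - 1)) S" by (auto simp: inj_on_def dn_eq_iff)
  have disj: "?U \<inter> ?D = {}" by (auto simp: up_ne_dn)
  have "(\<Sum>z\<in>Nt x. Pt x z * f z) = (\<Sum>z\<in>?U. Pt x z * f z) + (\<Sum>z\<in>?D. Pt x z * f z)"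
    unfolding car_succ_def by (rule sum.union_disjoint) (use finS disj in auto)
  also have "(\<Sum>z\<in>?U. Pt x z * f z) = (\<Sum>k\<in>S. pr k * ap x k * f (x(k := x k + 1)))"
    by (simp add: sum.reindex[OF injU] trans_up)
  also have "(\<Sum>z\<in>?D. Pt x z * f z) = (\<Sum>k\<in>S. pr k * (1 - ap x k) * f (x(k := x k - 1)))"
    by (simp add: sum.reindex[OF injD] trans_dn)
  finally have "(\<Sum>z\<in>Nt x. Pt x z * f z) = (\<Sum>k\<in>S. pr k * ap x k * f (x(k := x k + 1)))
     + (\<Sum>k\<in>S. pr k * (1 - ap x k) * f (x(k := x k - 1)))" .
  then show ?thesis by (simp only: sum.distrib[symmetric] distrib_left mult.assoc)
qed

lemma ap01: "0 \<le> ap x k \<and> ap x k \<le> 1"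
  using ap_bounds[of x k] q0 p1 by auto

lemma Pnn: "0 \<le> Pt x z"
  unfolding car_trans_def using pr0 ap01
  by (intro sum_nonneg mult_nonneg_nonneg) auto

lemma stoch: "(\<Sum>z\<in>Nt x. Pt x z) = 1"
  using sum_trans[of x "\<lambda>_. 1"] prsum by simp

lemma Pout: "z \<notin> Nt x \<Longrightarrow> Pt x z = 0"
  unfolding car_trans_def car_succ_def by (auto intro!: sum.neutral)

lemma gen: "gen_chain Pt Nt"
  by unfold_locales (auto simp: finN Pnn stoch Pout)

definition "Ov x = real_of_int (overall_imb I m x)"
definition "Mg x i l = real_of_int (margin_imb I m x i l)"
definition "V x = wo * (Ov x)\<^sup>2 + (\<Sum>i=1..I. wm i * (\<Sum>l\<in>(\<lambda>k. k i) ` S. (Mg x i l)\<^sup>2))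
   + ws * (\<Sum>k\<in>S. (real_of_int (x k))\<^sup>2)"
definition "Lf x k = wo * Ov x + (\<Sum>i=1..I. wm i * Mg x i (k i)) + ws * real_of_int (x k)"

lemma Imx_eq: "Imx x k s = wo * (Ov x + s)\<^sup>2 + (\<Sum>i=1..I. wm i * (Mg x i (k i) + s)\<^sup>2)
   + ws * (real_of_int (x k) + s)\<^sup>2"
  unfolding Imb_def Ov_def Mg_def by simp

lemma Ov_upd: "k \<in> S \<Longrightarrow> Ov (x(k := x k + s)) = Ov x + s"
  unfolding Ov_def overall_imb_def using sum_upd_lin[OF finS, of x k s] by simp

lemma Mg_upd: "k \<in> S \<Longrightarrow> Mg (x(k := x k + s)) i l = Mg x i l + (if k i = l then real_of_int s else 0)"
  unfolding Mg_def margin_imb_def using sum_upd_lin[of "{k\<in>S. k i = l}" x k s] finS by simp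

lemma V_upd:
  assumes k: "k \<in> S"
  shows "V (x(k := x k + s)) = V x + Imx x k s - Imx x k 0"
proof -
  have A: "(\<Sum>l\<in>(\<lambda>k. k i) ` S. (Mg (x(k := x k + s)) i l)\<^sup>2)
      = (\<Sum>l\<in>(\<lambda>k. k i) ` S. (Mg x i l)\<^sup>2) + (Mg x i (k i) + s)\<^sup>2 - (Mg x i (k i))\<^sup>2" for i
    unfolding Mg_upd[OF k] using sq_upd[of "(\<lambda>k. k i) ` S" "k i" "\<lambda>l. Mg x i l" "real_of_int s"] finS k
    by simp
  have B: "(\<Sum>k'\<in>S. (real_of_int ((x(k := x k + s)) k'))\<^sup>2)
      = (\<Sum>k'\<in>S. (real_of_int (x k'))\<^sup>2) - (real_of_int (x k))\<^sup>2 + (real_of_int (x k + s))\<^sup>2"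
    using sum_upd[OF finS k, of "\<lambda>a b. (real_of_int a)\<^sup>2" x "x k + s"] by simp
  have C: "(\<Sum>i=1..I. wm i * ((\<Sum>l\<in>(\<lambda>k. k i) ` S. (Mg x i l)\<^sup>2) + (Mg x i (k i) + s)\<^sup>2 - (Mg x i (k i))\<^sup>2))
     = (\<Sum>i=1..I. wm i * (\<Sum>l\<in>(\<lambda>k. k i) ` S. (Mg x i l)\<^sup>2)) + (\<Sum>i=1..I. wm i * (Mg x i (k i) + s)\<^sup>2)
       - (\<Sum>i=1..I. wm i * (Mg x i (k i))\<^sup>2)"
    by (simp add: sum.distrib[symmetric] sum_subtractf[symmetric] algebra_simps)
  show ?thesis
    unfolding V_def Ov_upd[OF k] A B Imx_eq C by (simp add: algebra_simps)
qed

lemma Im_sum: "Imx x k 1 + Imx x k (-1) - 2 * Imx x k 0 = 2"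
proof -
  have "(\<Sum>i=1..I. wm i * (Mg x i (k i) + 1)\<^sup>2) + (\<Sum>i=1..I. wm i * (Mg x i (k i) - 1)\<^sup>2)
      - 2 * (\<Sum>i=1..I. wm i * (Mg x i (k i))\<^sup>2) = 2 * (\<Sum>i=1..I. wm i)"
    by (simp add: sum.distrib[symmetric] sum_subtractf[symmetric] sum_distrib_left algebra_simps power2_eq_square)
  then show ?thesis unfolding Imx_eq using wsum by (simp add: algebra_simps power2_eq_square)
qed

lemma Im_diff: "Imx x k 1 - Imx x k (-1) = 4 * Lf x k"
proof -
  have "(\<Sum>i=1..I. wm i * (Mg x i (k i) + 1)\<^sup>2) - (\<Sum>i=1..I. wm i * (Mg x i (k i) - 1)\<^sup>2)
      = 4 * (\<Sum>i=1..I. wm i * Mg x i (k i))"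
    by (simp add: sum_subtractf[symmetric] sum_distrib_left algebra_simps power2_eq_square)
  then show ?thesis unfolding Imx_eq Lf_def by (simp add: algebra_simps power2_eq_square)
qed

lemma step_exp:
  "ap x k * (Imx x k 1 - Imx x k 0) + (1 - ap x k) * (Imx x k (-1) - Imx x k 0) = 1 - 2*(p-q)*\<bar>Lf x k\<bar>"
proof -
  have s: "Imx x k 1 + Imx x k (-1) - 2 * Imx x k 0 = 2" by (rule Im_sum)
  have d: "Imx x k 1 - Imx x k (-1) = 4 * Lf x k" by (rule Im_diff)
  have e1: "Imx x k 1 = Imx x k (-1) + 4 * Lf x k" using d by simp
  have e2: "Imx x k (-1) - Imx x k 0 = 1 - 2 * Lf x k" using s d by simp
  have p': "p = 1 - q" using pq by simp
  have e: "ap x k * (Imx x k 1 - Imx x k 0) + (1 - ap x k) * (Imx x k (-1) - Imx x k 0)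
     = ap x k * (4 * Lf x k) + (Imx x k (-1) - Imx x k 0)"
    unfolding e1 by (simp add: algebra_simps)
  have a: "ap x k = (if Lf x k > 0 then q else if Lf x k < 0 then p else 1/2)"
    unfolding assign_prob_def Let_def using d by auto
  show ?thesis
  proof (cases "Lf x k > 0")
    case True
    then have aq: "ap x k = q" using a by simp
    have pmq: "p - q = 1 - 2*q" using pq by simp
    have "ap x k * (4 * Lf x k) + (1 - 2 * Lf x k) = 1 - 2*(p-q)*\<bar>Lf x k\<bar>"
      unfolding aq abs_of_pos[OF True] pmq by (simp add: algebra_simps)
    then show ?thesis using e e2 by simp
  next
    case False
    show ?thesis
    proof (cases "Lf x k < 0")
      case True
      then have aq: "ap x k = p" using a False by simp
      have pmq: "p - q = 2*p - 1" using pq by simp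
      have "ap x k * (4 * Lf x k) + (1 - 2 * Lf x k) = 1 - 2*(p-q)*\<bar>Lf x k\<bar>"
        unfolding aq abs_of_neg[OF True] pmq by (simp add: algebra_simps)
      then show ?thesis using e e2 by simp
    next
      case F2: False
      then have "Lf x k = 0" using False by simp
      then show ?thesis using e e2 by simp
    qed
  qed
qed

lemma drift: "(\<Sum>z\<in>Nt x. Pt x z * V z) = V x + 1 - 2*(p-q)*(\<Sum>k\<in>S. pr k * \<bar>Lf x k\<bar>)"
proof -
  have "(\<Sum>z\<in>Nt x. Pt x z * V z) =
     (\<Sum>k\<in>S. pr k * (ap x k * V (x(k := x k + 1)) + (1 - ap x k) * V (x(k := x k - 1))))"
    by (rule sum_trans)
  also have "\<dots> = (\<Sum>k\<in>S. pr k * V x + pr k * (1 - 2*(p-q)*\<bar>Lf x k\<bar>))"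
  proof (rule sum.cong)
    fix k assume k: "k \<in> S"
    have u: "V (x(k := x k + 1)) = V x + Imx x k 1 - Imx x k 0" using V_upd[OF k, of x 1] by simp
    have d: "V (x(k := x k - 1)) = V x + Imx x k (-1) - Imx x k 0" using V_upd[OF k, of x "-1"] by simp
    show "pr k * (ap x k * V (x(k := x k + 1)) + (1 - ap x k) * V (x(k := x k - 1)))
        = pr k * V x + pr k * (1 - 2*(p-q)*\<bar>Lf x k\<bar>)"
      unfolding u d step_exp[symmetric] by (simp add: algebra_simps)
  qed simp
  also have "\<dots> = (\<Sum>k\<in>S. pr k) * V x + (\<Sum>k\<in>S. pr k) - 2*(p-q)*(\<Sum>k\<in>S. pr k * \<bar>Lf x k\<bar>)"
    by (simp add: sum.distrib sum_subtractf sum_distrib_left sum_distrib_right algebra_simps)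
  also have "\<dots> = V x + 1 - 2*(p-q)*(\<Sum>k\<in>S. pr k * \<bar>Lf x k\<bar>)"
    using prsum by simp
  finally show ?thesis .
qed

lemma Ov_sum: "Ov x = (\<Sum>k\<in>S. real_of_int (x k))"
  unfolding Ov_def overall_imb_def by simp

lemma Mg_sum: "Mg x i l = (\<Sum>k\<in>{k\<in>S. k i = l}. real_of_int (x k))"
  unfolding Mg_def margin_imb_def by simp

lemma regroup: "(\<Sum>k\<in>S. real_of_int (x k) * Mg x i (k i)) = (\<Sum>l\<in>(\<lambda>k. k i) ` S. (Mg x i l)\<^sup>2)"
proof -
  have "(\<Sum>k\<in>S. real_of_int (x k) * Mg x i (k i))
      = (\<Sum>l\<in>(\<lambda>k. k i) ` S. \<Sum>k\<in>{k\<in>S. k i = l}. real_of_int (x k) * Mg x i (k i))"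
    by (rule sum.image_gen[OF finS])
  also have "\<dots> = (\<Sum>l\<in>(\<lambda>k. k i) ` S. \<Sum>k\<in>{k\<in>S. k i = l}. real_of_int (x k) * Mg x i l)"
    by (intro sum.cong) auto
  also have "\<dots> = (\<Sum>l\<in>(\<lambda>k. k i) ` S. (Mg x i l)\<^sup>2)"
    by (intro sum.cong) (auto simp: sum_distrib_right[symmetric] Mg_sum[symmetric] power2_eq_square)
  finally show ?thesis .
qed

lemma V_eq: "V x = (\<Sum>k\<in>S. real_of_int (x k) * Lf x k)"
proof -
  have "(\<Sum>k\<in>S. real_of_int (x k) * Lf x k)
     = wo * Ov x * (\<Sum>k\<in>S. real_of_int (x k)) + (\<Sum>i=1..I. wm i * (\<Sum>k\<in>S. real_of_int (x k) * Mg x i (k i)))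
       + ws * (\<Sum>k\<in>S. (real_of_int (x k))\<^sup>2)"
    unfolding Lf_def
    by (simp add: algebra_simps sum.distrib sum_distrib_left power2_eq_square sum.swap[of _ S])
  then show ?thesis unfolding V_def regroup Ov_sum[symmetric] by (simp add: power2_eq_square)
qed

lemma V_nonneg: "0 \<le> V x"
  unfolding V_def using wo0 ws0 wm0
  by (intro add_nonneg_nonneg mult_nonneg_nonneg sum_nonneg) auto

definition "c0 = (if I = 1 then ws + wm 1 else ws)"

lemma V_lower: "c0 * (\<Sum>k\<in>S. (real_of_int (x k))\<^sup>2) \<le> V x"
proof (cases "I = 1")
  case False
  have "0 \<le> wo * (Ov x)\<^sup>2 + (\<Sum>i=1..I. wm i * (\<Sum>l\<in>(\<lambda>k. k i) ` S. (Mg x i l)\<^sup>2))"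
    using wo0 wm0 by (intro add_nonneg_nonneg mult_nonneg_nonneg sum_nonneg) auto
  then show ?thesis using False unfolding V_def c0_def by simp
next
  case True
  have inj: "inj_on (\<lambda>k. k 1) S"
  proof (rule inj_onI)
    fix a b assume a: "a \<in> S" and b: "b \<in> S" and e: "a 1 = b 1"
    show "a = b" using a b e True unfolding strata_def by (intro PiE_ext[of a "{1..I}"]) auto
  qed
  have fib: "{k'\<in>S. k' 1 = k 1} = {k}" if k: "k \<in> S" for k
    using inj k unfolding inj_on_def by auto
  have "(\<Sum>l\<in>(\<lambda>k. k 1) ` S. (Mg x 1 l)\<^sup>2) = (\<Sum>k\<in>S. (Mg x 1 (k 1))\<^sup>2)"
    using sum.reindex[OF inj, of "\<lambda>l. (Mg x 1 l)\<^sup>2"] by (simp add: comp_def)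
  also have "\<dots> = (\<Sum>k\<in>S. (real_of_int (x k))\<^sup>2)"
  proof (rule sum.cong)
    fix k assume k: "k \<in> S"
    have "Mg x 1 (k 1) = (\<Sum>k'\<in>{k'\<in>S. k' 1 = k 1}. real_of_int (x k'))" by (rule Mg_sum)
    also have "\<dots> = real_of_int (x k)" unfolding fib[OF k] by simp
    finally show "(Mg x 1 (k 1))\<^sup>2 = (real_of_int (x k))\<^sup>2" by simp
  qed simp
  finally have e: "(\<Sum>l\<in>(\<lambda>k. k 1) ` S. (Mg x 1 l)\<^sup>2) = (\<Sum>k\<in>S. (real_of_int (x k))\<^sup>2)" .
  have s1: "(\<Sum>i=1..I. wm i * (\<Sum>l\<in>(\<lambda>k. k i) ` S. (Mg x i l)\<^sup>2))
     = wm 1 * (\<Sum>l\<in>(\<lambda>k. k 1) ` S. (Mg x 1 l)\<^sup>2)" using True by simp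
  have c: "c0 = ws + wm 1" unfolding c0_def using True by simp
  have "0 \<le> wo * (Ov x)\<^sup>2" using wo0 by simp
  then show ?thesis unfolding V_def s1 e c by (simp add: algebra_simps)
qed

definition "Sp = {k\<in>S. pr k \<noteq> 0}"
definition "X = {x::(nat\<Rightarrow>nat)\<Rightarrow>int. \<forall>k. k \<notin> Sp \<longrightarrow> x k = 0}"
definition "pmin = Min (insert 1 (pr ` Sp))"

lemma finSp: "finite Sp" unfolding Sp_def using finS by simp

lemma pmin_pos: "0 < pmin"
proof -
  have "\<forall>a\<in>insert 1 (pr ` Sp). 0 < a" using pr0 unfolding Sp_def by force
  then show ?thesis unfolding pmin_def using finSp by (simp add: Min_gr_iff)
qed

lemma pmin_le: "k \<in> Sp \<Longrightarrow> pmin \<le> pr k"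
  unfolding pmin_def using finSp by (intro Min_le) auto

lemma pmin_le1: "pmin \<le> 1"
  unfolding pmin_def using finSp by (intro Min_le) auto

lemma Sp_ne: "Sp \<noteq> {}"
proof
  assume "Sp = {}"
  then have "\<forall>k\<in>S. pr k = 0" unfolding Sp_def by auto
  then have "(\<Sum>k\<in>S. pr k) = 0" by simp
  then show False using prsum by simp
qed

lemma Sp_S: "Sp \<subseteq> S" unfolding Sp_def by auto

lemma closX:
  assumes x: "x \<in> X" and z: "z \<in> Nt x" and P: "Pt x z \<noteq> 0"
  shows "z \<in> X"
proof -
  obtain k where k: "k \<in> S" and zz: "z = x(k := x k + 1) \<or> z = x(k := x k - 1)"
    using z unfolding car_succ_def by auto
  have "pr k \<noteq> 0" using zz P trans_up[OF k] trans_dn[OF k] by auto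
  then have "k \<in> Sp" using k unfolding Sp_def by auto
  then show ?thesis using x zz unfolding X_def by auto
qed

lemma c0_pos: "0 < c0" using c0pos unfolding c0_def .

lemma bound:
  assumes x: "x \<in> X"
  shows "\<exists>Mx\<ge>0. (\<forall>k\<in>S. \<bar>real_of_int (x k)\<bar> \<le> Mx) \<and> c0 * Mx \<le> (\<Sum>k\<in>Sp. \<bar>Lf x k\<bar>)"
proof -
  let ?A = "(\<lambda>k. \<bar>real_of_int (x k)\<bar>) ` Sp"
  have fA: "finite ?A" "?A \<noteq> {}" using finSp Sp_ne by auto
  obtain ks where ks: "ks \<in> Sp" and mx: "Max ?A = \<bar>real_of_int (x ks)\<bar>"
    using Max_in[OF fA] by auto
  define Mx where "Mx = \<bar>real_of_int (x ks)\<bar>"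
  have le: "\<forall>k\<in>S. \<bar>real_of_int (x k)\<bar> \<le> Mx"
  proof
    fix k assume k: "k \<in> S"
    show "\<bar>real_of_int (x k)\<bar> \<le> Mx"
    proof (cases "k \<in> Sp")
      case True then show ?thesis using Max_ge[OF fA(1)] mx unfolding Mx_def by auto
    next
      case False then show ?thesis using x unfolding X_def Mx_def by auto
    qed
  qed
  have "V x = (\<Sum>k\<in>S. real_of_int (x k) * Lf x k)" by (rule V_eq)
  also have "\<dots> = (\<Sum>k\<in>Sp. real_of_int (x k) * Lf x k)"
    by (rule sum.mono_neutral_right[OF finS Sp_S]) (use x in \<open>auto simp: X_def\<close>)
  also have "\<dots> \<le> (\<Sum>k\<in>Sp. Mx * \<bar>Lf x k\<bar>)"
  proof (rule sum_mono)
    fix k assume k: "k \<in> Sp"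
    have "real_of_int (x k) * Lf x k \<le> \<bar>real_of_int (x k)\<bar> * \<bar>Lf x k\<bar>"
      by (metis abs_ge_self abs_mult)
    also have "\<dots> \<le> Mx * \<bar>Lf x k\<bar>" using le k Sp_S by (intro mult_right_mono) auto
    finally show "real_of_int (x k) * Lf x k \<le> Mx * \<bar>Lf x k\<bar>" .
  qed
  finally have up: "V x \<le> Mx * (\<Sum>k\<in>Sp. \<bar>Lf x k\<bar>)" by (simp add: sum_distrib_left)
  have "(real_of_int (x ks))\<^sup>2 \<le> (\<Sum>k\<in>S. (real_of_int (x k))\<^sup>2)"
    using ks Sp_S finS by (intro member_le_sum) auto
  then have "c0 * Mx\<^sup>2 \<le> c0 * (\<Sum>k\<in>S. (real_of_int (x k))\<^sup>2)"
    using c0_pos unfolding Mx_def by (intro mult_left_mono) auto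
  also have "\<dots> \<le> V x" by (rule V_lower)
  finally have "c0 * Mx * Mx \<le> Mx * (\<Sum>k\<in>Sp. \<bar>Lf x k\<bar>)" using up by (simp add: power2_eq_square mult.assoc)
  then have main: "c0 * Mx \<le> (\<Sum>k\<in>Sp. \<bar>Lf x k\<bar>)"
  proof (cases "Mx = 0")
    case True then show ?thesis by (simp add: sum_nonneg)
  next
    case False
    then have "0 < Mx" unfolding Mx_def by simp
    then show ?thesis using \<open>c0 * Mx * Mx \<le> Mx * _\<close>
      by (metis mult.commute mult_le_cancel_left_pos)
  qed
  show ?thesis using le main unfolding Mx_def by (intro exI[of _ "\<bar>real_of_int (x ks)\<bar>"]) auto
qed

definition "dst y x = nat (\<Sum>k\<in>S. \<bar>x k - y k\<bar>)"
definition "delta = q * pmin"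
definition "gam = delta / 2"

lemma delta_bounds: "0 < delta \<and> delta \<le> 1"
proof -
  have "q * pmin \<le> 1 * 1" using q0 qp p1 pmin_le1 pmin_pos by (intro mult_mono) auto
  then show ?thesis unfolding delta_def using q0 pmin_pos by simp
qed

lemma gam_bounds: "0 < gam \<and> gam < 1" unfolding gam_def using delta_bounds by auto

lemma dst_real: "real (dst y x) = (\<Sum>k\<in>S. real_of_int \<bar>x k - y k\<bar>)"
proof -
  have "0 \<le> (\<Sum>k\<in>S. \<bar>x k - y k\<bar>)" by (rule sum_nonneg) simp
  then show ?thesis unfolding dst_def by simp
qed

lemma dst_nb:
  assumes z: "z \<in> Nt x" shows "dst y z \<le> dst y x + 1"
proof -
  obtain k s where k: "k \<in> S" and s: "s = 1 \<or> s = -1" and zz: "z = x(k := x k + s)"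
    using z unfolding car_succ_def by auto (metis diff_conv_add_uminus)
  have "(\<Sum>k'\<in>S. \<bar>z k' - y k'\<bar>) = (\<Sum>k'\<in>S. \<bar>x k' - y k'\<bar>) - \<bar>x k - y k\<bar> + \<bar>x k + s - y k\<bar>"
    unfolding zz using sum_upd[OF finS k, of "\<lambda>a b. \<bar>a - y b\<bar>" x "x k + s"] by simp
  moreover have "\<bar>x k + s - y k\<bar> \<le> \<bar>x k - y k\<bar> + 1" using s by auto
  ultimately show ?thesis unfolding dst_def by simp
qed

lemma z0_exists:
  assumes x: "x \<in> X" and y: "y \<in> X" and ne: "x \<noteq> y"
  shows "\<exists>z0\<in>Nt x. delta \<le> Pt x z0 \<and> dst y z0 + 1 = dst y x"
proof -
  obtain k where kne: "x k \<noteq> y k" using ne by auto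
  then have kSp: "k \<in> Sp" using x y unfolding X_def by (metis (mono_tags, lifting) mem_Collect_eq)
  then have k: "k \<in> S" using Sp_S by auto
  have prk: "pmin \<le> pr k" using pmin_le[OF kSp] .
  define s where "s = (if x k < y k then 1 else (-1::int))"
  define z0 where "z0 = x(k := x k + s)"
  have zN: "z0 \<in> Nt x" unfolding z0_def s_def car_succ_def using k by auto
  have P: "Pt x z0 = (if x k < y k then pr k * ap x k else pr k * (1 - ap x k))"
    unfolding z0_def s_def using trans_up[OF k, of x] trans_dn[OF k, of x] by auto
  have "q \<le> ap x k" "q \<le> 1 - ap x k" using ap_bounds[of x k] pq by auto
  then have m1: "pmin * q \<le> pr k * ap x k" and m2: "pmin * q \<le> pr k * (1 - ap x k)"
    using prk pmin_pos q0 by (intro mult_mono; simp)+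
  then have "q * pmin \<le> Pt x z0" unfolding P by (simp add: mult.commute)
  moreover have "(\<Sum>k'\<in>S. \<bar>z0 k' - y k'\<bar>) = (\<Sum>k'\<in>S. \<bar>x k' - y k'\<bar>) - \<bar>x k - y k\<bar> + \<bar>x k + s - y k\<bar>"
    unfolding z0_def using sum_upd[OF finS k, of "\<lambda>a b. \<bar>a - y b\<bar>" x "x k + s"] by simp
  moreover have "\<bar>x k + s - y k\<bar> = \<bar>x k - y k\<bar> - 1" using kne unfolding s_def by auto
  moreover have "\<bar>x k - y k\<bar> \<le> (\<Sum>k'\<in>S. \<bar>x k' - y k'\<bar>)"
    using finS k by (intro member_le_sum) auto
  ultimately show ?thesis using zN kne unfolding dst_def delta_def by (intro bexI[of _ z0]) auto
qed

definition "Rr = 1 / ((p - q) * pmin * c0)"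
definition "Dy y = (\<Sum>k\<in>S. \<bar>real_of_int (y k)\<bar>)"
definition "T y = nat \<lceil>real (card S) * Rr + Dy y\<rceil>"

lemma drift_le: "(\<Sum>z\<in>Nt x. Pt x z * V z) \<le> V x + 1"
proof -
  have "0 \<le> (\<Sum>k\<in>S. pr k * \<bar>Lf x k\<bar>)" using pr0 by (intro sum_nonneg) auto
  then show ?thesis unfolding drift using qp by (simp add: mult_nonneg_nonneg)
qed

lemma far:
  assumes x: "x \<in> X" and d: "T y \<le> dst y x"
  shows "(\<Sum>z\<in>Nt x. Pt x z * V z) \<le> V x - 1"
proof -
  obtain Mx where M0: "Mx \<ge> 0" and le: "\<forall>k\<in>S. \<bar>real_of_int (x k)\<bar> \<le> Mx"
    and cm: "c0 * Mx \<le> (\<Sum>k\<in>Sp. \<bar>Lf x k\<bar>)" using bound[OF x] by blast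
  have cS: "0 < card S" using finS S_ne by (simp add: card_gt_0_iff)
  have "real (dst y x) \<le> (\<Sum>k\<in>S. Mx + \<bar>real_of_int (y k)\<bar>)"
    unfolding dst_real
  proof (rule sum_mono)
    fix k assume k: "k \<in> S"
    have "real_of_int \<bar>x k - y k\<bar> \<le> \<bar>real_of_int (x k)\<bar> + \<bar>real_of_int (y k)\<bar>" by simp
    then show "real_of_int \<bar>x k - y k\<bar> \<le> Mx + \<bar>real_of_int (y k)\<bar>" using le k by fastforce
  qed
  also have "\<dots> = real (card S) * Mx + Dy y" unfolding Dy_def by (simp add: sum.distrib)
  finally have dle: "real (dst y x) \<le> real (card S) * Mx + Dy y" .
  have "real (T y) \<ge> real (card S) * Rr + Dy y" unfolding T_def by linarith
  then have "real (card S) * Rr \<le> real (card S) * Mx" using d dle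
    by (smt (verit) of_nat_le_iff)
  then have MR: "Rr \<le> Mx" using cS by simp
  have pqpos: "0 < p - q" using qp by simp
  have "(\<Sum>k\<in>Sp. pmin * \<bar>Lf x k\<bar>) \<le> (\<Sum>k\<in>Sp. pr k * \<bar>Lf x k\<bar>)"
    using pmin_le by (intro sum_mono mult_right_mono) auto
  also have "\<dots> \<le> (\<Sum>k\<in>S. pr k * \<bar>Lf x k\<bar>)"
    using pr0 Sp_S finS by (intro sum_mono2) auto
  finally have A: "pmin * (\<Sum>k\<in>Sp. \<bar>Lf x k\<bar>) \<le> (\<Sum>k\<in>S. pr k * \<bar>Lf x k\<bar>)"
    by (simp add: sum_distrib_left)
  have "1 = (p - q) * pmin * c0 * Rr" unfolding Rr_def using pqpos pmin_pos c0_pos by simp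
  also have "\<dots> \<le> (p - q) * pmin * c0 * Mx"
    using MR pqpos pmin_pos c0_pos by (intro mult_left_mono) auto
  also have "\<dots> \<le> (p - q) * (pmin * (\<Sum>k\<in>Sp. \<bar>Lf x k\<bar>))"
    using cm pqpos pmin_pos by (simp add: mult.assoc mult_left_mono)
  also have "\<dots> \<le> (p - q) * (\<Sum>k\<in>S. pr k * \<bar>Lf x k\<bar>)"
    using A pqpos by (intro mult_left_mono) auto
  finally show ?thesis unfolding drift by linarith
qed

definition "Lam y = 4 / (delta * gam ^ T y)"
definition "G y j = Lam y * (1 - gam ^ j)"

lemma Lam_pos: "0 < Lam y" unfolding Lam_def using delta_bounds gam_bounds by simp

lemma G_nonneg: "0 \<le> G y j"
proof -
  have "gam ^ j \<le> 1" using gam_bounds by (simp add: power_le_one)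
  then show ?thesis unfolding G_def using Lam_pos[of y] by simp
qed

lemma G_mono: "i \<le> j \<Longrightarrow> G y i \<le> G y j"
  unfolding G_def using Lam_pos[of y] gam_bounds
  by (intro mult_left_mono) (auto intro: power_decreasing)

lemma G_key:
  assumes d1: "1 \<le> d" and dT: "d < T y" and P0: "delta \<le> P0" "P0 \<le> 1"
  shows "P0 * G y (d - 1) + (1 - P0) * G y (d + 1) \<le> G y d - 2"
proof -
  obtain e where e: "d = Suc e" using d1 by (cases d) auto
  have g0: "0 < gam" "gam < 1" using gam_bounds by auto
  have "gam ^ d \<le> P0 * gam ^ e + (1 - P0) * gam ^ (Suc (Suc e)) - gam ^ Suc e"
  proof -
    define t where "t = gam ^ e"
    have t0: "0 \<le> t" unfolding t_def using g0 by simp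
    have a: "2 * gam * t \<le> P0 * t" using P0 t0 unfolding gam_def by (intro mult_right_mono) auto
    have b: "0 \<le> (1 - P0) * (gam * gam * t)" using P0 g0 t0 by simp
    have eqs: "gam ^ d = gam * t" "gam ^ Suc e = gam * t" "gam ^ Suc (Suc e) = gam * gam * t"
      "gam ^ e = t" unfolding t_def e by simp_all
    have "gam * t \<le> P0 * t + (1 - P0) * (gam * gam * t) - gam * t" using a b by linarith
    then show ?thesis by (simp only: eqs)
  qed
  moreover have "gam ^ T y \<le> gam ^ d" using dT g0 by (intro power_decreasing) auto
  moreover have "Lam y * gam ^ T y = 4 / delta"
    unfolding Lam_def using g0 delta_bounds by simp
  moreover have "2 \<le> 4 / delta" using delta_bounds by (simp add: field_simps)
  ultimately have "2 \<le> Lam y * (P0 * gam ^ e + (1 - P0) * gam ^ (Suc (Suc e)) - gam ^ Suc e)"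
    using Lam_pos by (smt (verit, best) mult_left_mono)
  then show ?thesis unfolding G_def using e by (simp add: algebra_simps)
qed

definition "gg y z = (if z = y then G y (T y) + 2 else G y (min (dst y z) (T y)))"
definition "W y z = V z + gg y z"

lemma sub_le: "(\<And>z. z \<in> Nt x \<Longrightarrow> 0 \<le> f z) \<Longrightarrow>
   (\<Sum>z\<in>Nt x - {y}. Pt x z * f z) \<le> (\<Sum>z\<in>Nt x. Pt x z * f z)"
  by (rule sum_mono2) (auto simp: finN Pnn)

lemma sub_const: "(\<And>z. z \<in> Nt x - {y} \<Longrightarrow> f z \<le> C) \<Longrightarrow> 0 \<le> C \<Longrightarrow>
   (\<Sum>z\<in>Nt x - {y}. Pt x z * f z) \<le> C"
proof -
  assume h: "\<And>z. z \<in> Nt x - {y} \<Longrightarrow> f z \<le> C" and C: "0 \<le> C"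
  have "(\<Sum>z\<in>Nt x - {y}. Pt x z * f z) \<le> (\<Sum>z\<in>Nt x - {y}. Pt x z * C)"
    using h Pnn by (intro sum_mono mult_left_mono) auto
  also have "\<dots> = C * (\<Sum>z\<in>Nt x - {y}. Pt x z)" by (simp add: sum_distrib_left mult.commute)
  also have "\<dots> \<le> C * 1" using gen_chain.sub_le1[OF gen] C by (intro mult_left_mono) auto
  finally show ?thesis by simp
qed

lemma Wsup:
  assumes x: "x \<in> X" and y: "y \<in> X"
  shows "1 + (\<Sum>z\<in>Nt x - {y}. Pt x z * W y z) \<le> W y x"
proof -
  have split: "(\<Sum>z\<in>Nt x - {y}. Pt x z * W y z) =
     (\<Sum>z\<in>Nt x - {y}. Pt x z * V z) + (\<Sum>z\<in>Nt x - {y}. Pt x z * gg y z)"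
    unfolding W_def by (simp add: algebra_simps sum.distrib)
  have PV: "(\<Sum>z\<in>Nt x - {y}. Pt x z * V z) \<le> (\<Sum>z\<in>Nt x. Pt x z * V z)"
    by (rule sub_le) (simp add: V_nonneg)
  have gT: "gg y z \<le> G y (T y)" if "z \<noteq> y" for z
    using that unfolding gg_def by (auto intro: G_mono)
  show ?thesis
  proof (cases "x = y")
    case True
    have "(\<Sum>z\<in>Nt x - {y}. Pt x z * gg y z) \<le> G y (T y)"
      by (rule sub_const) (use gT G_nonneg in auto)
    then show ?thesis using split PV drift_le[of x] True unfolding W_def gg_def by simp
  next
    case ne: False
    show ?thesis
    proof (cases "T y \<le> dst y x")
      case True
      have "(\<Sum>z\<in>Nt x - {y}. Pt x z * gg y z) \<le> G y (T y)"
        by (rule sub_const) (use gT G_nonneg in auto)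
      moreover have "gg y x = G y (T y)" using ne True unfolding gg_def by simp
      ultimately show ?thesis using split PV far[OF x True] unfolding W_def by simp
    next
      case False
      define d where "d = dst y x"
      obtain z0 where z0N: "z0 \<in> Nt x" and Pz0: "delta \<le> Pt x z0" and dz0: "dst y z0 + 1 = d"
        using z0_exists[OF x y ne] unfolding d_def by blast
      have dT: "d < T y" using False unfolding d_def by simp
      have d1: "1 \<le> d" using dz0 by simp
      define phi where "phi z = (if z = z0 then G y (d - 1) else G y (d + 1))" for z
      have "(\<Sum>z\<in>Nt x - {y}. Pt x z * gg y z) \<le> (\<Sum>z\<in>Nt x - {y}. Pt x z * phi z)"
      proof (rule sum_mono)
        fix z assume z: "z \<in> Nt x - {y}"
        have "gg y z \<le> phi z"
        proof (cases "z = z0")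
          case True
          then show ?thesis using z dz0 dT unfolding gg_def phi_def by auto
        next
          case False
          have "min (dst y z) (T y) \<le> d + 1" using dst_nb[of z x y] z unfolding d_def by auto
          then show ?thesis using z False unfolding gg_def phi_def by (auto intro: G_mono)
        qed
        then show "Pt x z * gg y z \<le> Pt x z * phi z" using Pnn by (intro mult_left_mono) auto
      qed
      also have "\<dots> \<le> (\<Sum>z\<in>Nt x. Pt x z * phi z)"
        by (rule sub_le) (simp add: phi_def G_nonneg)
      also have "(\<Sum>z\<in>Nt x. Pt x z * phi z) = Pt x z0 * G y (d - 1) + (1 - Pt x z0) * G y (d + 1)"
      proof -
        have "(\<Sum>z\<in>Nt x. Pt x z * phi z) = Pt x z0 * phi z0 + (\<Sum>z\<in>Nt x - {z0}. Pt x z * phi z)"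
          using sum.remove[OF finN z0N] by simp
        also have "(\<Sum>z\<in>Nt x - {z0}. Pt x z * phi z) = (\<Sum>z\<in>Nt x - {z0}. Pt x z) * G y (d + 1)"
          unfolding phi_def by (simp add: sum_distrib_right)
        also have "(\<Sum>z\<in>Nt x - {z0}. Pt x z) = 1 - Pt x z0"
          using sum.remove[OF finN z0N, of "Pt x"] stoch[of x] by simp
        finally show ?thesis unfolding phi_def by simp
      qed
      also have "\<dots> \<le> G y d - 2"
      proof (rule G_key[OF d1 dT Pz0])
        show "Pt x z0 \<le> 1" using sum.remove[OF finN z0N, of "Pt x"] stoch[of x]
            sum_nonneg[of "Nt x - {z0}" "Pt x"] Pnn by force
      qed
      finally have gb: "(\<Sum>z\<in>Nt x - {y}. Pt x z * gg y z) \<le> G y d - 2" .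
      have "gg y x = G y d" using ne dT unfolding gg_def d_def by simp
      then show ?thesis using split PV drift_le[of x] gb unfolding W_def by simp
    qed
  qed
qed

lemma W_nonneg: "0 \<le> W y x"
  unfolding W_def gg_def using V_nonneg G_nonneg by (simp add: add_nonneg_nonneg)

lemma reach_X: "x \<in> X \<Longrightarrow> nstep Pt Nt n x z \<noteq> 0 \<Longrightarrow> z \<in> X"
proof (induction n arbitrary: x)
  case 0 then show ?case by (simp split: if_splits)
next
  case (Suc n)
  then obtain w where w: "w \<in> Nt x" "Pt x w * nstep Pt Nt n w z \<noteq> 0"
    by (auto elim: sum.not_neutral_contains_not_neutral)
  then have "w \<in> X" using closX[OF Suc.prems(1) w(1)] by auto
  then show ?case using Suc.IH w by auto
qed

lemma main: "pos_recurrent_chain Pt Nt (\<lambda>_. 0)"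
  unfolding pos_recurrent_chain_def
proof (intro allI impI)
  fix y assume "\<exists>n\<ge>1. 0 < nstep Pt Nt n (\<lambda>_. 0) y"
  then obtain n where "nstep Pt Nt n (\<lambda>_. 0) y \<noteq> 0" by force
  moreover have "(\<lambda>_. 0) \<in> X" unfolding X_def by simp
  ultimately have y: "y \<in> X" using reach_X by blast
  show "pos_recurrent_state Pt Nt y"
    by (rule gen_chain.pos_rec_from_W[OF gen, where X=X and y=y and W="W y"])
       (use closX Wsup[OF _ y] W_nonneg y in auto)
qed

end


lemma c0_from_ustar:
  fixes I :: nat and m :: "nat \<Rightarrow> nat" and wo ws :: real and wm :: "nat \<Rightarrow> real"
  assumes I1: "I \<ge> 1" and m1: "\<forall>i\<in>{1..I}. m i > 1"
    and wo0: "wo \<ge> 0" and wm0: "\<forall>i\<in>{1..I}. wm i \<ge> 0"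
    and wsum: "wo + (\<Sum>i=1..I. wm i) + ws = 1"
    and us: "(\<Sum>L\<in>Pow {1..I} - {{}}.
            (wo + (\<Sum>j\<in>{1..I} - L. wm j)) * (\<Prod>t\<in>L. real (m t) - 1)) < 1/2"
  shows "(if I = 1 then ws + wm 1 else ws) > 0"
proof -
  define f where "f L = (wo + (\<Sum>j\<in>{1..I} - L. wm j)) * (\<Prod>t\<in>L. real (m t) - 1)" for L
  define a where "a i = wo + (\<Sum>j\<in>{1..I} - {i}. wm j)" for i
  have fnn: "0 \<le> f L" if "L \<in> Pow {1..I} - {{}}" for L
  proof -
    have "0 \<le> wo + (\<Sum>j\<in>{1..I} - L. wm j)" using wo0 wm0 by (intro add_nonneg_nonneg sum_nonneg) auto
    moreover have "0 \<le> (\<Prod>t\<in>L. real (m t) - 1)"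
    proof (rule prod_nonneg)
      fix t assume "t \<in> L"
      then have "t \<in> {1..I}" using that by auto
      then have "m t > 1" using m1 by auto
      then show "0 \<le> real (m t) - 1" by simp
    qed
    ultimately show ?thesis unfolding f_def by simp
  qed
  have sub: "(\<lambda>i. {i}) ` {1..I} \<subseteq> Pow {1..I} - {{}}" by auto
  have "(\<Sum>L\<in>(\<lambda>i. {i}) ` {1..I}. f L) \<le> (\<Sum>L\<in>Pow {1..I} - {{}}. f L)"
    by (rule sum_mono2) (use sub fnn in auto)
  also have "(\<Sum>L\<in>(\<lambda>i. {i}) ` {1..I}. f L) = (\<Sum>i\<in>{1..I}. f {i})"
    by (simp add: sum.reindex inj_on_def)
  finally have A: "(\<Sum>i\<in>{1..I}. f {i}) < 1/2" using us unfolding f_def by simp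
  have B: "a i \<le> f {i}" if i: "i \<in> {1..I}" for i
  proof -
    have "0 \<le> a i" unfolding a_def using wo0 wm0 by (intro add_nonneg_nonneg sum_nonneg) auto
    moreover have "m i > 1" using m1 i by blast
    then have "1 \<le> real (m i) - 1" by simp
    ultimately have "a i * 1 \<le> a i * (real (m i) - 1)" by (intro mult_left_mono) auto
    then show ?thesis unfolding f_def a_def by simp
  qed
  have "(\<Sum>i\<in>{1..I}. a i) \<le> (\<Sum>i\<in>{1..I}. f {i})" using B by (rule sum_mono)
  then have C: "(\<Sum>i\<in>{1..I}. a i) < 1/2" using A by linarith
  define Wm where "Wm = (\<Sum>i=1..I. wm i)"
  have Wm0: "0 \<le> Wm" unfolding Wm_def using wm0 by (intro sum_nonneg) auto
  have ai: "a i = wo + Wm - wm i" if "i \<in> {1..I}" for i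
    unfolding a_def Wm_def using that by (simp add: sum_diff1)
  have "(\<Sum>i\<in>{1..I}. a i) = (\<Sum>i\<in>{1..I}. wo + Wm - wm i)" by (intro sum.cong) (auto simp: ai)
  also have "\<dots> = real I * (wo + Wm) - Wm" by (simp add: sum_subtractf Wm_def)
  finally have D: "(\<Sum>i\<in>{1..I}. a i) = real I * (wo + Wm) - Wm" .
  show ?thesis
  proof (cases "I = 1")
    case True
    then have "Wm = wm 1" unfolding Wm_def by simp
    then show ?thesis using C D True wsum unfolding Wm_def by simp
  next
    case False
    then have "2 \<le> real I" using I1 by simp
    then have "2 * (wo + Wm) \<le> real I * (wo + Wm)" using wo0 Wm0 by (intro mult_right_mono) auto
    moreover have "wo + Wm + ws = 1" using wsum unfolding Wm_def .
    moreover have "real I * (wo + Wm) - Wm < 1/2" using C D by simp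
    moreover have key: "\<And>X. 2*(wo+Wm) \<le> X \<Longrightarrow> wo + Wm + ws = 1 \<Longrightarrow> X - Wm < 1/2 \<Longrightarrow> 0 < ws"
    proof -
      fix X assume h: "2*(wo+Wm) \<le> X" "wo + Wm + ws = 1" "X - Wm < 1/2"
      show "0 < ws" using h Wm0 wo0 by argo
    qed
    ultimately have "0 < ws" by blast
    then show ?thesis using False by simp
  qed
qed

theorem theorem2:
  fixes I :: nat and m :: "nat \<Rightarrow> nat"
    and wo ws p q :: real and wm :: "nat \<Rightarrow> real"
    and pr :: "(nat \<Rightarrow> nat) \<Rightarrow> real"
  assumes "I \<ge> 1"
    and "\<forall>i\<in>{1..I}. m i > 1"
    and "wo \<ge> 0" and "ws \<ge> 0" and "\<forall>i\<in>{1..I}. wm i \<ge> 0"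
    and "wo + (\<Sum>i=1..I. wm i) + ws = 1"
    and "0 < q" and "q < p" and "p < 1" and "p + q = 1"
    and "\<forall>k\<in>strata I m. pr k \<ge> 0"
    and "(\<Sum>k\<in>strata I m. pr k) = 1"
    and "(\<Sum>L\<in>Pow {1..I} - {{}}.
            (wo + (\<Sum>j\<in>{1..I} - L. wm j)) * (\<Prod>t\<in>L. real (m t) - 1)) < 1/2"
  shows "pos_recurrent_chain (car_trans I m wo wm ws p q pr) (car_succ I m) (\<lambda>_. 0)"
proof -
  have c: "(if I = 1 then ws + wm 1 else ws) > 0"
    by (rule c0_from_ustar) (use assms in auto)
  interpret car I m wo ws p q wm pr
    by unfold_locales (use assms c in auto)
  show ?thesis by (rule main)
qed


end
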